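(* Let $\Gamma((r^S)_{S\subseteq I})$ be a quitting game satisfying $r^i_i=0$ for all $i\in I$, with $I_*=[n]\neq\emptyset$. If the problem $\mathrm{LCP}((\hat r^i)_{i=1}^n,\vec 0)$ has a solution $(w,z)$ with $z_0<1$, then for every $\varepsilon>0$ the game has a stationary $\varepsilon$-equilibrium.
   Context: A quitting game $\Gamma((r^S)_{S\subseteq I})$: finite player set $I=[N]$, vectors $r^S\in[-1,1]^N$ for all $S\subseteq I$; at each stage $t\in\mathbb N$ each player chooses to continue or quit; with $t^*$ the first stage at which some player quits and $S^*$ the set of players quitting then ($S^*=\emptyset$ if nobody ever quits), the payoff is $r^{S^*}$. Write $r^i:=r^{\{i\}}$. Strategies are sequences $x_i=(x_i^t)_t\subset[0,1]$ of conditional quitting probabilities; stationary if constant in $t$. $\gamma(x):=\mathbb E_x[r^{S^*}]$; $x$ is an $\varepsilon$-equilibrium if $\gamma_i(x)\ge\gamma_i(x_i',x_{-i})-\varepsilon$ for all $i,x_i'$. Normal players: $I_0:=I$, $I_{l+1}:=\{i\in I_l:\ \exists j\in I_l,\ j\neq i,\ r^j_i\le0\}$, $I_*:=\bigcap_l I_l$; $n:=|I_*|$, and players are renamed so that $I_*=[n]$. For $i\in[n]$, $\hat r^i\in\mathbb R^n$ is the restriction of $r^i$ to the coordinates in $I_*$. For vectors $\hat r^1,\dots,\hat r^n,q\in\mathbb R^n$, the problem $\mathrm{LCP}((\hat r^i)_{i=1}^n,q)$ asks for $w\in\mathbb R^n_{\ge0}$ and a probability vector $z=(z_0,z_1,\dots,z_n)\in\Delta(\{0,1,\dots,n\})$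 such that $w=z_0q+\sum_{i=1}^n z_i\hat r^i$ and, for every $i\in[n]$, $z_i=0$ or $w_i=0$. *)

theory Defs
  imports Complex_Main
begin

text \<open>A payoff is given by r :: nat set => nat => real, where r S i is player i's payoff
  when S is the set of players quitting at the first quitting stage (S = {} if nobody quits).
  A strategy of a player is a sequence of conditional quitting probabilities.\<close>

definition strategy :: "(nat \<Rightarrow> real) \<Rightarrow> bool" where
  "strategy y \<longleftrightarrow> (\<forall>t. 0 \<le> y t \<and> y t \<le> 1)"

definition profile :: "nat set \<Rightarrow> (nat \<Rightarrow> nat \<Rightarrow> real) \<Rightarrow> bool" where
  "profile I x \<longleftrightarrow> (\<forall>i\<in>I. strategy (x i))"

definition stationary :: "nat set \<Rightarrow> (nat \<Rightarrow> nat \<Rightarrow> real) \<Rightarrow> bool" where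
  "stationary I x \<longleftrightarrow> (\<forall>i\<in>I. \<forall>t. x i t = x i 0)"

definition cont_prob :: "nat set \<Rightarrow> (nat \<Rightarrow> nat \<Rightarrow> real) \<Rightarrow> nat \<Rightarrow> real" where
  "cont_prob I x T = (\<Prod>s<T. \<Prod>j\<in>I. (1 - x j s))"

definition quit_prob :: "nat set \<Rightarrow> (nat \<Rightarrow> nat \<Rightarrow> real) \<Rightarrow> nat \<Rightarrow> nat set \<Rightarrow> real" where
  "quit_prob I x t S = cont_prob I x t * (\<Prod>j\<in>S. x j t) * (\<Prod>j\<in>I - S. (1 - x j t))"

definition payoff :: "nat set \<Rightarrow> (nat set \<Rightarrow> nat \<Rightarrow> real) \<Rightarrow> (nat \<Rightarrow> nat \<Rightarrow> real) \<Rightarrow> nat \<Rightarrow> real" where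
  "payoff I r x i =
     (\<Sum>t. \<Sum>S\<in>Pow I - {{}}. quit_prob I x t S * r S i) + lim (cont_prob I x) * r {} i"

definition eps_equilibrium ::
  "nat set \<Rightarrow> (nat set \<Rightarrow> nat \<Rightarrow> real) \<Rightarrow> real \<Rightarrow> (nat \<Rightarrow> nat \<Rightarrow> real) \<Rightarrow> bool" where
  "eps_equilibrium I r \<epsilon> x \<longleftrightarrow> profile I x \<and>
     (\<forall>i\<in>I. \<forall>y. strategy y \<longrightarrow> payoff I r x i \<ge> payoff I r (x(i := y)) i - \<epsilon>)"

fun normal_level :: "nat set \<Rightarrow> (nat set \<Rightarrow> nat \<Rightarrow> real) \<Rightarrow> nat \<Rightarrow> nat set" where
  "normal_level I r 0 = I"
| "normal_level I r (Suc l) =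
     {i \<in> normal_level I r l. \<exists>j\<in>normal_level I r l. j \<noteq> i \<and> r {j} i \<le> 0}"

definition normal_players :: "nat set \<Rightarrow> (nat set \<Rightarrow> nat \<Rightarrow> real) \<Rightarrow> nat set" where
  "normal_players I r = (\<Inter>l. normal_level I r l)"

text \<open>LCP((rhat^i)_{i in K}, q) with the index set K (instead of renaming K to [n]):
  w >= 0 on K, (z0, (z_i)_{i in K}) a probability vector,
  w = z0 q + sum_i z_i rhat^i on K, and complementarity z_i = 0 or w_i = 0.
  Here rhat i k is the k-th coordinate of rhat^i.\<close>
definition LCP_solution ::
  "nat set \<Rightarrow> (nat \<Rightarrow> nat \<Rightarrow> real) \<Rightarrow> (nat \<Rightarrow> real) \<Rightarrow> (nat \<Rightarrow> real) \<Rightarrow> real \<Rightarrow> (nat \<Rightarrow> real) \<Rightarrow> bool" where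
  "LCP_solution K rhat q w z0 z \<longleftrightarrow>
     (\<forall>k\<in>K. 0 \<le> w k) \<and> 0 \<le> z0 \<and> (\<forall>i\<in>K. 0 \<le> z i) \<and> z0 + (\<Sum>i\<in>K. z i) = 1 \<and>
     (\<forall>k\<in>K. w k = z0 * q k + (\<Sum>i\<in>K. z i * rhat i k)) \<and>
     (\<forall>i\<in>K. z i = 0 \<or> w i = 0)"

end

theory Submission
  imports Defs
begin

lemma CC_main:
  fixes y :: "nat \<Rightarrow> real" and q A B :: real
  assumes q0: "0 \<le> q" and q1: "q < 1" and y: "\<And>t. 0 \<le> y t \<and> y t \<le> 1"
  defines "C \<equiv> \<lambda>T. \<Prod>s<T. (1 - y s) * q"
  shows "C \<longlonglongrightarrow> 0"
    and "(\<lambda>t. C t * (y t * A + (1 - y t) * B)) sums ((\<Sum>t. C t * y t) * (A - B/(1-q)) + B/(1-q))"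
    and "0 \<le> (\<Sum>t. C t * y t)" and "(\<Sum>t. C t * y t) \<le> 1"
proof -
  have Cnn: "0 \<le> C t" for t unfolding C_def using y q0 by (intro prod_nonneg) auto
  have Cle: "C t \<le> q ^ t" for t
  proof -
    have "C t \<le> (\<Prod>s<t. q)" unfolding C_def
      by (rule prod_mono) (use y q0 in \<open>auto simp: mult_le_cancel_right1 intro: mult_left_le_one_le\<close>)
    then show ?thesis by simp
  qed
  have CS: "C (Suc t) = C t * ((1 - y t) * q)" for t unfolding C_def by simp
  have qt: "(\<lambda>t. q ^ t) \<longlonglongrightarrow> 0" using q0 q1 by (intro LIMSEQ_power_zero) auto
  show C0: "C \<longlonglongrightarrow> 0"
    by (rule tendsto_sandwich[of "\<lambda>_. 0" _ _ "\<lambda>t. q^t"]) (use Cnn Cle qt in auto)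
  have tel: "(\<lambda>t. C t - C (Suc t)) sums 1"
    using telescope_sums'[OF C0] by (simp add: C_def)
  have yle: "C t * y t \<le> C t - C (Suc t)" for t
  proof -
    have "(1 - y t) * q \<le> 1 - y t" using y[of t] q1 q0 by (simp add: mult_left_le)
    then have "y t \<le> 1 - (1 - y t) * q" by simp
    then have "C t * y t \<le> C t * (1 - (1 - y t) * q)" using Cnn by (rule mult_left_mono)
    then show ?thesis by (simp add: CS algebra_simps)
  qed
  have smy: "summable (\<lambda>t. C t * y t)"
    by (rule summable_comparison_test[OF _ sums_summable[OF tel]]) (use yle Cnn y in \<open>auto intro!: exI[of _ 0]\<close>)
  show "0 \<le> (\<Sum>t. C t * y t)" using Cnn y by (intro suminf_nonneg smy) auto
  have "(\<Sum>t. C t * y t) \<le> (\<Sum>t. C t - C (Suc t))"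
    by (rule suminf_le) (use yle smy sums_summable[OF tel] in auto)
  then show "(\<Sum>t. C t * y t) \<le> 1" using sums_unique[OF tel] by simp
  define v where "v = B/(1-q)"
  have Bv: "B = v * (1 - q)" using q1 by (simp add: v_def)
  have eq: "C t * (y t * A + (1 - y t) * B) = C t * y t * (A - v) + v * (C t - C (Suc t))" for t
    by (simp add: CS Bv algebra_simps)
  have "(\<lambda>t. C t * y t * (A - v) + v * (C t - C (Suc t))) sums ((\<Sum>t. C t * y t) * (A - v) + v * 1)"
    by (intro sums_add sums_mult2 sums_mult tel summable_sums smy)
  then show "(\<lambda>t. C t * (y t * A + (1 - y t) * B)) sums ((\<Sum>t. C t * y t) * (A - B/(1-q)) + B/(1-q))"
    unfolding eq v_def by simp
qed

lemma CC_const: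
  fixes p q :: real
  assumes q0: "0 \<le> q" and q1: "q < 1" and p: "0 \<le> p" "p \<le> 1"
  shows "(\<Sum>t. (\<Prod>s<t. (1 - p) * q) * p) = p / (1 - (1-p)*q)"
proof -
  have a: "0 \<le> (1-p)*q" using p q0 by simp
  have b: "(1-p)*q \<le> q" using p q0 by (intro mult_left_le_one_le) auto
  have n: "norm ((1-p)*q) < 1" using a b q1 by simp
  have "(\<lambda>t. ((1-p)*q)^t * p) sums (1/(1 - (1-p)*q) * p)"
    by (intro sums_mult2 geometric_sums n)
  then show ?thesis by (simp add: sums_unique[symmetric])
qed

definition PT :: "nat set \<Rightarrow> (nat \<Rightarrow> real) \<Rightarrow> nat set \<Rightarrow> real" where
  "PT U p T = (\<Prod>k\<in>T. p k) * (\<Prod>k\<in>U-T. 1 - p k)"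

lemma weier:
  fixes a :: "nat \<Rightarrow> real"
  assumes "finite A" "\<And>k. k \<in> A \<Longrightarrow> 0 \<le> a k \<and> a k \<le> 1"
  shows "1 - (\<Sum>k\<in>A. a k) \<le> (\<Prod>k\<in>A. 1 - a k)"
  using assms
proof (induction A rule: finite_induct)
  case empty then show ?case by simp
next
  case (insert x F)
  have ax: "0 \<le> a x" "a x \<le> 1" using insert.prems by auto
  have ih: "1 - sum a F \<le> prod (\<lambda>k. 1 - a k) F" using insert by auto
  have sF: "0 \<le> sum a F" using insert.prems by (intro sum_nonneg) auto
  have "1 - sum a (insert x F) = 1 - a x - sum a F" using insert by simp
  also have "\<dots> \<le> (1 - a x) * (1 - sum a F)" using ax sF by (simp add: algebra_simps)
  also have "\<dots> \<le> (1 - a x) * prod (\<lambda>k. 1 - a k) F" using ax ih by (intro mult_left_mono) auto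
  also have "\<dots> = prod (\<lambda>k. 1 - a k) (insert x F)" using insert by simp
  finally show ?case .
qed

context
  fixes U :: "nat set" and p :: "nat \<Rightarrow> real"
  assumes fin: "finite U" and p01: "\<And>k. 0 \<le> p k \<and> p k \<le> 1"
begin

lemma PT_nn: "0 \<le> PT U p T"
  unfolding PT_def using p01 by (intro mult_nonneg_nonneg prod_nonneg) auto

lemma PT_sum: "(\<Sum>T\<in>Pow U. PT U p T) = 1"
proof -
  have "(\<Prod>k\<in>U. p k + (1 - p k)) = (\<Sum>T\<in>Pow U. PT U p T)"
    unfolding PT_def by (rule prod_add[OF fin])
  then show ?thesis by simp
qed

lemma PT_empty: "PT U p {} = (\<Prod>k\<in>U. 1 - p k)"
  by (simp add: PT_def)

lemma PT_sum_ne: "(\<Sum>T\<in>Pow U - {{}}. PT U p T) = 1 - (\<Prod>k\<in>U. 1 - p k)"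
proof -
  have "(\<Sum>T\<in>Pow U. PT U p T) = PT U p {} + (\<Sum>T\<in>Pow U - {{}}. PT U p T)"
    using fin by (subst sum.remove[of _ "{}"]) auto
  then show ?thesis using PT_sum PT_empty by simp
qed

lemma PT_single: "k \<in> U \<Longrightarrow> PT U p {k} = p k * (\<Prod>l\<in>U-{k}. 1 - p l)"
  by (simp add: PT_def)

lemma PT_single_le: "k \<in> U \<Longrightarrow> PT U p {k} \<le> p k"
proof -
  assume k: "k \<in> U"
  have "(\<Prod>l\<in>U-{k}. 1 - p l) \<le> 1" using p01 by (intro prod_le_1) auto
  then show ?thesis using PT_single[OF k] p01[of k] by (simp add: mult_left_le)
qed

lemma PT_single_ge: "k \<in> U \<Longrightarrow> p k * (1 - (\<Sum>l\<in>U. p l)) \<le> PT U p {k}"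
proof -
  assume k: "k \<in> U"
  have "1 - (\<Sum>l\<in>U. p l) \<le> 1 - (\<Sum>l\<in>U-{k}. p l)"
    using fin p01 by (simp add: sum_mono2)
  also have "\<dots> \<le> (\<Prod>l\<in>U-{k}. 1 - p l)" using fin p01 by (intro weier) auto
  finally show ?thesis using PT_single[OF k] p01[of k] by (simp add: mult_left_mono)
qed

lemma sing_sub: "(\<lambda>k. {k}) ` U \<subseteq> Pow U - {{}}" by auto

lemma sum_singles: "(\<Sum>T\<in>(\<lambda>k. {k}) ` U. f T) = (\<Sum>k\<in>U. f {k})"
  by (subst sum.reindex) (auto intro: inj_onI)

lemma q_bounds:
  defines "\<sigma> \<equiv> \<Sum>k\<in>U. p k"
  shows "1 - (\<Prod>k\<in>U. 1 - p k) \<le> \<sigma>"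
    and "\<sigma> * (1 - \<sigma>) \<le> 1 - (\<Prod>k\<in>U. 1 - p k)"
    and "\<sigma> - (\<Sum>k\<in>U. PT U p {k}) \<ge> 0"
    and "1 - (\<Prod>k\<in>U. 1 - p k) - (\<Sum>k\<in>U. PT U p {k}) \<ge> 0"
    and "(\<Sum>k\<in>U. PT U p {k}) \<ge> \<sigma> * (1 - \<sigma>)"
proof -
  show "1 - (\<Prod>k\<in>U. 1 - p k) \<le> \<sigma>" using weier[OF fin, of p] p01 by (simp add: \<sigma>_def)
  show s1: "(\<Sum>k\<in>U. PT U p {k}) \<ge> \<sigma> * (1 - \<sigma>)"
  proof -
    have "\<sigma> * (1 - \<sigma>) = (\<Sum>k\<in>U. p k * (1 - \<sigma>))" by (simp add: \<sigma>_def sum_distrib_right)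
    also have "\<dots> \<le> (\<Sum>k\<in>U. PT U p {k})" by (rule sum_mono) (use PT_single_ge in \<open>auto simp: \<sigma>_def\<close>)
    finally show ?thesis .
  qed
  have s2: "(\<Sum>k\<in>U. PT U p {k}) \<le> 1 - (\<Prod>k\<in>U. 1 - p k)"
  proof -
    have "(\<Sum>k\<in>U. PT U p {k}) = (\<Sum>T\<in>(\<lambda>k. {k}) ` U. PT U p T)" by (simp add: sum_singles)
    also have "\<dots> \<le> (\<Sum>T\<in>Pow U - {{}}. PT U p T)"
      by (rule sum_mono2) (use fin sing_sub PT_nn in auto)
    finally show ?thesis using PT_sum_ne by simp
  qed
  then show "1 - (\<Prod>k\<in>U. 1 - p k) - (\<Sum>k\<in>U. PT U p {k}) \<ge> 0" by simp
  show "\<sigma> * (1 - \<sigma>) \<le> 1 - (\<Prod>k\<in>U. 1 - p k)" using s1 s2 by simp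
  show "\<sigma> - (\<Sum>k\<in>U. PT U p {k}) \<ge> 0"
    using sum_mono[of U "\<lambda>k. PT U p {k}" p] PT_single_le by (simp add: \<sigma>_def)
qed

lemma abs_sum_bound:
  fixes g :: "nat set \<Rightarrow> real"
  assumes "\<And>T. T \<in> Pow U - {{}} \<Longrightarrow> \<bar>g T\<bar> \<le> 1"
  shows "\<bar>\<Sum>T\<in>Pow U - {{}}. PT U p T * g T\<bar> \<le> 1 - (\<Prod>k\<in>U. 1 - p k)"
proof -
  have "\<bar>\<Sum>T\<in>Pow U - {{}}. PT U p T * g T\<bar> \<le> (\<Sum>T\<in>Pow U - {{}}. \<bar>PT U p T * g T\<bar>)"
    by (rule sum_abs)
  also have "\<dots> \<le> (\<Sum>T\<in>Pow U - {{}}. PT U p T)"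
    by (rule sum_mono) (use assms PT_nn in \<open>auto simp: abs_mult intro: mult_left_le\<close>)
  finally show ?thesis using PT_sum_ne by simp
qed

lemma B_L:
  fixes g :: "nat set \<Rightarrow> real"
  assumes g: "\<And>T. T \<in> Pow U - {{}} \<Longrightarrow> \<bar>g T\<bar> \<le> 1"
  defines "\<sigma> \<equiv> \<Sum>k\<in>U. p k"
  shows "\<bar>(\<Sum>T\<in>Pow U - {{}}. PT U p T * g T) - (\<Sum>k\<in>U. p k * g {k})\<bar> \<le> 2 * \<sigma>^2"
proof -
  define M where "M = Pow U - {{}} - (\<lambda>k. {k}) ` U"
  have split: "(\<Sum>T\<in>Pow U - {{}}. PT U p T * g T) =
     (\<Sum>T\<in>(\<lambda>k. {k}) ` U. PT U p T * g T) + (\<Sum>T\<in>M. PT U p T * g T)"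
    unfolding M_def using fin sing_sub by (subst sum.subset_diff[of "(\<lambda>k. {k}) ` U"]) auto
  have splitP: "(\<Sum>T\<in>Pow U - {{}}. PT U p T) =
     (\<Sum>T\<in>(\<lambda>k. {k}) ` U. PT U p T) + (\<Sum>T\<in>M. PT U p T)"
    unfolding M_def using fin sing_sub by (subst sum.subset_diff[of "(\<lambda>k. {k}) ` U"]) auto
  have M1: "\<bar>\<Sum>T\<in>M. PT U p T * g T\<bar> \<le> (\<Sum>T\<in>M. PT U p T)"
  proof -
    have "\<bar>\<Sum>T\<in>M. PT U p T * g T\<bar> \<le> (\<Sum>T\<in>M. \<bar>PT U p T * g T\<bar>)" by (rule sum_abs)
    also have "\<dots> \<le> (\<Sum>T\<in>M. PT U p T)"
    proof (rule sum_mono)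
      fix T assume "T \<in> M"
      then have "\<bar>g T\<bar> \<le> 1" using g by (auto simp: M_def)
      then show "\<bar>PT U p T * g T\<bar> \<le> PT U p T" using PT_nn[of T] by (simp add: abs_mult mult_left_le)
    qed
    finally show ?thesis .
  qed
  have S1: "\<bar>(\<Sum>k\<in>U. PT U p {k} * g {k}) - (\<Sum>k\<in>U. p k * g {k})\<bar> \<le> (\<Sum>k\<in>U. p k - PT U p {k})"
  proof -
    have "\<bar>(\<Sum>k\<in>U. PT U p {k} * g {k}) - (\<Sum>k\<in>U. p k * g {k})\<bar> = \<bar>\<Sum>k\<in>U. (PT U p {k} - p k) * g {k}\<bar>"
      by (simp add: sum_subtractf left_diff_distrib)
    also have "\<dots> \<le> (\<Sum>k\<in>U. \<bar>(PT U p {k} - p k) * g {k}\<bar>)" by (rule sum_abs)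
    also have "\<dots> \<le> (\<Sum>k\<in>U. p k - PT U p {k})"
    proof (rule sum_mono)
      fix k assume k: "k \<in> U"
      have "\<bar>g {k}\<bar> \<le> 1" using g k by auto
      moreover have "PT U p {k} \<le> p k" using PT_single_le k by auto
      ultimately show "\<bar>(PT U p {k} - p k) * g {k}\<bar> \<le> p k - PT U p {k}"
        by (simp add: abs_mult mult_left_le)
    qed
    finally show ?thesis .
  qed
  have qb: "\<sigma> * (1 - \<sigma>) \<le> (\<Sum>k\<in>U. PT U p {k})" "1 - (\<Prod>k\<in>U. 1 - p k) \<le> \<sigma>"
    using q_bounds by (auto simp: \<sigma>_def)
  have "\<bar>(\<Sum>T\<in>Pow U - {{}}. PT U p T * g T) - (\<Sum>k\<in>U. p k * g {k})\<bar>
      \<le> (\<Sum>k\<in>U. p k - PT U p {k}) + (\<Sum>T\<in>M. PT U p T)"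
    using split M1 S1 by (simp add: sum_singles)
  also have "\<dots> = \<sigma> - (\<Sum>k\<in>U. PT U p {k}) + (1 - (\<Prod>k\<in>U. 1 - p k) - (\<Sum>k\<in>U. PT U p {k}))"
    using splitP PT_sum_ne by (simp add: sum_subtractf sum_singles \<sigma>_def)
  also have "\<dots> \<le> 2 * \<sigma>^2" using qb by (simp add: power2_eq_square algebra_simps)
  finally show ?thesis .
qed

end

lemma inj_insert_Pow: "i \<notin> U \<Longrightarrow> inj_on (insert i) (Pow U)"
  by (rule inj_onI) (metis PowD insert_ident subsetD)

definition "qq I i p = (\<Prod>k\<in>I-{i}. 1 - p k)"
definition "AA I i p r = (\<Sum>T\<in>Pow (I-{i}). PT (I-{i}) p T * r (insert i T) i)"
definition "BB I i p r = (\<Sum>T\<in>Pow (I-{i}) - {{}}. PT (I-{i}) p T * r T i)"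

context
  fixes I :: "nat set" and i :: nat and p :: "nat \<Rightarrow> real" and y :: "nat \<Rightarrow> real"
  assumes finI: "finite I" and iI: "i \<in> I" and p01: "\<And>k. 0 \<le> p k \<and> p k \<le> 1"
    and y01: "\<And>t. 0 \<le> y t \<and> y t \<le> 1"
begin

abbreviation "xx \<equiv> (\<lambda>k t. p k)(i := y)"

lemma finU: "finite (I - {i})" using finI by simp

lemma stage:
  fixes f :: "nat set \<Rightarrow> real"
  shows "(\<Sum>S\<in>Pow I - {{}}. (\<Prod>j\<in>S. xx j t) * (\<Prod>j\<in>I-S. 1 - xx j t) * f S) =
    y t * (\<Sum>T\<in>Pow (I-{i}). PT (I-{i}) p T * f (insert i T)) +
    (1 - y t) * (\<Sum>T\<in>Pow (I-{i}) - {{}}. PT (I-{i}) p T * f T)"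
proof -
  define U where "U = I - {i}"
  have IU: "I = insert i U" "i \<notin> U" using iI by (auto simp: U_def)
  have finU: "finite U" using finI by (simp add: U_def)
  have dec: "Pow I - {{}} = (Pow U - {{}}) \<union> insert i ` Pow U"
    unfolding IU(1) Pow_insert by auto
  have disj: "(Pow U - {{}}) \<inter> insert i ` Pow U = {}" using IU(2) by auto
  have fin1: "finite (Pow U - {{}})" "finite (insert i ` Pow U)" using finU by auto
  have part1: "(\<Prod>j\<in>insert i T. xx j t) * (\<Prod>j\<in>I - insert i T. 1 - xx j t) * f (insert i T)
      = y t * (PT U p T * f (insert i T))" if T: "T \<in> Pow U" for T
  proof -
    have Tf: "finite T" "i \<notin> T" using T finU IU(2) by (auto intro: finite_subset)
    have pT: "(\<Prod>j\<in>T. xx j t) = (\<Prod>j\<in>T. p j)" using Tf by (intro prod.cong) auto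
    have "(\<Prod>j\<in>insert i T. xx j t) = y t * (\<Prod>j\<in>T. p j)"
      by (subst prod.insert[OF Tf]) (simp only: pT, simp)
    moreover have "I - insert i T = U - T" using IU by auto
    moreover have "(\<Prod>j\<in>U - T. 1 - xx j t) = (\<Prod>j\<in>U - T. 1 - p j)"
      using IU(2) by (intro prod.cong) auto
    ultimately show ?thesis by (simp add: PT_def)
  qed
  have part2: "(\<Prod>j\<in>T. xx j t) * (\<Prod>j\<in>I - T. 1 - xx j t) * f T
      = (1 - y t) * (PT U p T * f T)" if T: "T \<in> Pow U - {{}}" for T
  proof -
    have Tf: "finite T" "i \<notin> T" using T finU IU(2) by (auto intro: finite_subset)
    have "(\<Prod>j\<in>T. xx j t) = (\<Prod>j\<in>T. p j)" using Tf by (intro prod.cong) auto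
    moreover have "I - T = insert i (U - T)" "i \<notin> U - T" "finite (U - T)" using IU T finU by auto
    moreover have "(\<Prod>j\<in>U - T. 1 - xx j t) = (\<Prod>j\<in>U - T. 1 - p j)"
      using IU(2) by (intro prod.cong) auto
    ultimately show ?thesis by (simp add: PT_def)
  qed
  have "(\<Sum>S\<in>Pow I - {{}}. (\<Prod>j\<in>S. xx j t) * (\<Prod>j\<in>I-S. 1 - xx j t) * f S) =
     (\<Sum>S\<in>Pow U - {{}}. (\<Prod>j\<in>S. xx j t) * (\<Prod>j\<in>I-S. 1 - xx j t) * f S) +
     (\<Sum>S\<in>insert i ` Pow U. (\<Prod>j\<in>S. xx j t) * (\<Prod>j\<in>I-S. 1 - xx j t) * f S)"
    unfolding dec by (rule sum.union_disjoint[OF fin1 disj])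
  also have "(\<Sum>S\<in>insert i ` Pow U. (\<Prod>j\<in>S. xx j t) * (\<Prod>j\<in>I-S. 1 - xx j t) * f S)
     = (\<Sum>T\<in>Pow U. (\<Prod>j\<in>insert i T. xx j t) * (\<Prod>j\<in>I-insert i T. 1 - xx j t) * f (insert i T))"
    by (subst sum.reindex[OF inj_insert_Pow[OF IU(2)]]) simp
  also have "\<dots> = (\<Sum>T\<in>Pow U. y t * (PT U p T * f (insert i T)))"
    by (rule sum.cong[OF refl], rule part1) auto
  also have "(\<Sum>S\<in>Pow U - {{}}. (\<Prod>j\<in>S. xx j t) * (\<Prod>j\<in>I-S. 1 - xx j t) * f S)
     = (\<Sum>T\<in>Pow U - {{}}. (1 - y t) * (PT U p T * f T))"
    by (rule sum.cong[OF refl], rule part2) auto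
  finally show ?thesis by (simp add: sum_distrib_left U_def add.commute)
qed

lemma cont_eq: "cont_prob I xx T = (\<Prod>s<T. (1 - y s) * (\<Prod>k\<in>I-{i}. 1 - p k))"
proof -
  have "(\<Prod>j\<in>I. 1 - xx j s) = (1 - y s) * (\<Prod>k\<in>I-{i}. 1 - p k)" for s
  proof -
    have "(\<Prod>j\<in>I. 1 - xx j s) = (1 - xx i s) * (\<Prod>j\<in>I-{i}. 1 - xx j s)"
      using finI iI by (simp add: prod.remove)
    also have "(\<Prod>j\<in>I-{i}. 1 - xx j s) = (\<Prod>k\<in>I-{i}. 1 - p k)" by (rule prod.cong) auto
    finally show ?thesis by simp
  qed
  then show ?thesis unfolding cont_prob_def by simp
qed


lemma payoff_dev:
  assumes q1: "qq I i p < 1"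
  shows "\<exists>\<alpha>. 0 \<le> \<alpha> \<and> \<alpha> \<le> 1 \<and>
     payoff I r xx i = \<alpha> * (AA I i p r - BB I i p r / (1 - qq I i p)) + BB I i p r / (1 - qq I i p)"
    and "payoff I r xx i = (\<Sum>t. (\<Prod>s<t. (1 - y s) * qq I i p) * y t) * (AA I i p r - BB I i p r / (1 - qq I i p)) + BB I i p r / (1 - qq I i p)"
proof -
  have q0: "0 \<le> qq I i p" unfolding qq_def using p01 by (intro prod_nonneg) auto
  define C where "C = (\<lambda>T. \<Prod>s<T. (1 - y s) * qq I i p)"
  have M1: "C \<longlonglongrightarrow> 0" unfolding C_def by (rule CC_main(1)[OF q0 q1 y01])
  have M2: "(\<lambda>t. C t * (y t * AA I i p r + (1 - y t) * BB I i p r)) sums ((\<Sum>t. C t * y t) * (AA I i p r - BB I i p r/(1-qq I i p)) + BB I i p r/(1-qq I i p))"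
    unfolding C_def by (rule CC_main(2)[OF q0 q1 y01])
  have M3: "0 \<le> (\<Sum>t. C t * y t)" "(\<Sum>t. C t * y t) \<le> 1"
    unfolding C_def by (rule CC_main(3)[OF q0 q1 y01], rule CC_main(4)[OF q0 q1 y01])
  have cp: "cont_prob I xx = C" by (rule ext) (simp add: cont_eq C_def qq_def)
  have limC: "lim (cont_prob I xx) = 0" using M1 by (simp add: cp limI)
  have inner: "(\<Sum>S\<in>Pow I - {{}}. quit_prob I xx t S * r S i) = C t * (y t * AA I i p r + (1 - y t) * BB I i p r)" for t
  proof -
    have "(\<Sum>S\<in>Pow I - {{}}. quit_prob I xx t S * r S i) =
       C t * (\<Sum>S\<in>Pow I - {{}}. (\<Prod>j\<in>S. xx j t) * (\<Prod>j\<in>I-S. 1 - xx j t) * r S i)"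
      by (simp only: quit_prob_def cp sum_distrib_left mult.assoc)
    also have "(\<Sum>S\<in>Pow I - {{}}. (\<Prod>j\<in>S. xx j t) * (\<Prod>j\<in>I-S. 1 - xx j t) * r S i) = y t * AA I i p r + (1 - y t) * BB I i p r"
      unfolding AA_def BB_def by (rule stage)
    finally show ?thesis .
  qed
  have "payoff I r xx i = (\<Sum>t. C t * (y t * AA I i p r + (1 - y t) * BB I i p r))"
    unfolding payoff_def inner limC by simp
  also have "\<dots> = (\<Sum>t. C t * y t) * (AA I i p r - BB I i p r / (1 - qq I i p)) + BB I i p r / (1 - qq I i p)"
    using M2 by (simp add: sums_unique[symmetric])
  finally have P: "payoff I r xx i = (\<Sum>t. C t * y t) * (AA I i p r - BB I i p r / (1 - qq I i p)) + BB I i p r / (1 - qq I i p)" .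
  then show "payoff I r xx i = (\<Sum>t. (\<Prod>s<t. (1 - y s) * qq I i p) * y t) * (AA I i p r - BB I i p r / (1 - qq I i p)) + BB I i p r / (1 - qq I i p)"
    by (simp add: C_def)
  show "\<exists>\<alpha>. 0 \<le> \<alpha> \<and> \<alpha> \<le> 1 \<and> payoff I r xx i = \<alpha> * (AA I i p r - BB I i p r / (1 - qq I i p)) + BB I i p r / (1 - qq I i p)"
    using P M3 by auto
qed

end

lemma eq_player:
  fixes I :: "nat set" and i :: nat and p :: "nat \<Rightarrow> real" and r \<epsilon>
  assumes finI: "finite I" and iI: "i \<in> I" and p01: "\<And>k. 0 \<le> p k \<and> p k \<le> 1"
    and q1: "qq I i p < 1"
  defines "v \<equiv> BB I i p r / (1 - qq I i p)" and "A \<equiv> AA I i p r"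
    and "\<alpha>0 \<equiv> p i / (1 - (1 - p i) * qq I i p)"
  assumes c1: "(1 - \<alpha>0) * (A - v) \<le> \<epsilon>" and c2: "\<alpha>0 * (v - A) \<le> \<epsilon>"
    and ys: "strategy y"
  shows "payoff I r ((\<lambda>k t. p k)(i := y)) i - \<epsilon> \<le> payoff I r (\<lambda>k t. p k) i"
proof -
  have y01: "\<And>t. 0 \<le> y t \<and> y t \<le> 1" using ys by (simp add: strategy_def)
  have c01: "\<And>t. 0 \<le> (\<lambda>t. p i) t \<and> (\<lambda>t. p i) t \<le> 1" using p01 by simp
  obtain \<alpha> where al: "0 \<le> \<alpha>" "\<alpha> \<le> 1" "payoff I r ((\<lambda>k t. p k)(i := y)) i = \<alpha> * (A - v) + v"
    using payoff_dev(1)[of I i p y, OF finI iI p01 y01 q1] unfolding A_def v_def by blast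
  have q0: "0 \<le> qq I i p" unfolding qq_def using p01 by (intro prod_nonneg) auto
  have fx: "(\<lambda>k t. p k)(i := (\<lambda>t. p i)) = (\<lambda>k t. p k)" by (rule ext) simp
  have "payoff I r (\<lambda>k t. p k) i = (\<Sum>t. (\<Prod>s<t. (1 - p i) * qq I i p) * p i) * (A - v) + v"
    using payoff_dev(2)[of I i p "\<lambda>t. p i", OF finI iI p01 c01 q1, unfolded fx] unfolding A_def v_def by simp
  then have e: "payoff I r (\<lambda>k t. p k) i = \<alpha>0 * (A - v) + v"
    using CC_const[OF q0 q1 p01[THEN conjunct1] p01[THEN conjunct2]] by (simp add: \<alpha>0_def)
  show ?thesis
  proof (cases "A \<ge> v")
    case True
    then have "\<alpha> * (A - v) \<le> 1 * (A - v)" using al by (intro mult_right_mono) auto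
    then show ?thesis using e al c1 by (simp add: algebra_simps)
  next
    case False
    then have "0 * (v - A) \<le> \<alpha> * (v - A)" using al by (intro mult_right_mono) auto
    then show ?thesis using e al c2 by (simp add: algebra_simps)
  qed
qed


lemma est:
  fixes I :: "nat set" and i :: nat and p :: "nat \<Rightarrow> real" and r :: "nat set \<Rightarrow> nat \<Rightarrow> real"
  assumes finI: "finite I" and iI: "i \<in> I" and p01: "\<And>k. 0 \<le> p k \<and> p k \<le> 1"
    and rb: "\<And>S. S \<subseteq> I \<Longrightarrow> \<bar>r S i\<bar> \<le> 1" and r0: "r {i} i = 0"
  defines "\<sigma> \<equiv> \<Sum>k\<in>I-{i}. p k" and "L \<equiv> \<Sum>k\<in>I-{i}. p k * r {k} i"
  shows "\<bar>AA I i p r\<bar> \<le> 1 - qq I i p" and "\<bar>BB I i p r\<bar> \<le> 1 - qq I i p"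
    and "1 - qq I i p \<le> \<sigma>" and "\<sigma> * (1 - \<sigma>) \<le> 1 - qq I i p"
    and "\<bar>BB I i p r - L\<bar> \<le> 2 * \<sigma>^2" and "0 \<le> qq I i p"
proof -
  have finU: "finite (I - {i})" using finI by simp
  have AA': "AA I i p r = (\<Sum>T\<in>Pow (I-{i}) - {{}}. PT (I-{i}) p T * r (insert i T) i)"
  proof -
    have "AA I i p r = PT (I-{i}) p {} * r (insert i {}) i + (\<Sum>T\<in>Pow (I-{i}) - {{}}. PT (I-{i}) p T * r (insert i T) i)"
      unfolding AA_def using finU by (subst sum.remove[of _ "{}"]) auto
    then show ?thesis using r0 by simp
  qed
  show "\<bar>AA I i p r\<bar> \<le> 1 - qq I i p" unfolding AA' qq_def
  proof (rule abs_sum_bound[OF finU p01])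
    fix T assume "T \<in> Pow (I-{i}) - {{}}"
    then have "insert i T \<subseteq> I" using iI by auto
    then show "\<bar>r (insert i T) i\<bar> \<le> 1" by (rule rb)
  qed
  show "\<bar>BB I i p r\<bar> \<le> 1 - qq I i p" unfolding BB_def qq_def
    by (rule abs_sum_bound[OF finU p01]) (use rb in auto)
  show "1 - qq I i p \<le> \<sigma>" "\<sigma> * (1 - \<sigma>) \<le> 1 - qq I i p"
    using q_bounds[OF finU p01] by (auto simp: qq_def \<sigma>_def)
  show "\<bar>BB I i p r - L\<bar> \<le> 2 * \<sigma>^2" unfolding BB_def L_def \<sigma>_def
    by (rule B_L[OF finU p01]) (use rb in auto)
  show "0 \<le> qq I i p" unfolding qq_def using p01 by (intro prod_nonneg) auto
qed

lemma div_lb: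
  fixes B c D d :: real
  assumes a1: "-c \<le> B" and a2: "0 \<le> c" and a3: "d \<le> D" and a4: "0 < d"
  shows "-(c/d) \<le> B / D"
proof (cases "0 \<le> B")
  case True
  have D0: "0 < D" using a3 a4 by linarith
  have "0 \<le> B / D" using True D0 by simp
  moreover have "0 \<le> c / d" using a2 a4 by simp
  ultimately show ?thesis by linarith
next
  case False
  have D0: "0 < D" using a3 a4 by linarith
  have m: "B * D \<le> B * d" using False a3 by (intro mult_left_mono_neg) auto
  have e1: "B / d = (B * D) / (d * D)" using D0 a4 by simp
  have e2: "B / D = (B * d) / (d * D)" using D0 a4 by simp
  have "B / d \<le> B / D" unfolding e1 e2 using m D0 a4 by (intro divide_right_mono) auto
  moreover have "-c/d \<le> B/d" using a1 a4 by (intro divide_right_mono) auto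
  ultimately show ?thesis by simp
qed

lemma div_ub:
  fixes B c D d :: real
  assumes "B \<le> c" "0 \<le> c" "d \<le> D" "0 < d"
  shows "B / D \<le> c / d"
proof -
  have "-(c/d) \<le> (-B) / D" using assms by (intro div_lb) auto
  then show ?thesis by simp
qed

lemma abs_div1:
  fixes B D :: real
  assumes a1: "\<bar>B\<bar> \<le> D" and a2: "0 < D"
  shows "\<bar>B / D\<bar> \<le> 1"
proof -
  have "\<bar>B / D\<bar> = \<bar>B\<bar> / D" using a2 by simp
  also have "\<dots> \<le> D / D" using a1 a2 by (intro divide_right_mono) auto
  finally show ?thesis using a2 by simp
qed

lemma alpha_bounds:
  fixes p q :: real
  assumes "0 \<le> p" "p \<le> 1" "0 \<le> q" "q < 1"
  shows "0 \<le> p / (1 - (1-p)*q)" "p / (1 - (1-p)*q) \<le> 1"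
    and "p / (1 - (1-p)*q) \<le> p / (1 - q)"
    and "0 < p \<Longrightarrow> 1 - p / (1 - (1-p)*q) \<le> (1 - q) / p"
proof -
  have d1: "(1-p)*q \<le> q" using assms by (intro mult_left_le_one_le) auto
  have d0: "0 \<le> (1-p)*q" using assms by simp
  have den: "1 - (1-p)*q > 0" using d1 assms by simp
  have "(1-p)*q \<le> 1-p" using assms by (intro mult_left_le) auto
  then have den2: "p \<le> 1 - (1-p)*q" by simp
  show "0 \<le> p / (1 - (1-p)*q)" using den assms by simp
  show "p / (1 - (1-p)*q) \<le> 1" using den den2 by simp
  show "p / (1 - (1-p)*q) \<le> p / (1 - q)" using d1 assms den by (intro divide_left_mono) auto
  assume p0: "0 < p"
  have "1 - p / (1 - (1-p)*q) = (1-p)*(1-q) / (1 - (1-p)*q)" using den by (simp add: field_simps)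
  also have "\<dots> \<le> (1-p)*(1-q) / p" using den2 p0 assms by (intro divide_left_mono) auto
  also have "\<dots> \<le> (1-q)/p"
  proof -
    have "(1-p)*(1-q) \<le> 1-q" using assms by (intro mult_left_le_one_le) auto
    then show ?thesis using p0 by (intro divide_right_mono) auto
  qed
  finally show "1 - p / (1 - (1-p)*q) \<le> (1 - q) / p" .
qed


lemma player_ok:
  fixes I :: "nat set" and i :: nat and p :: "nat \<Rightarrow> real" and r :: "nat set \<Rightarrow> nat \<Rightarrow> real"
  assumes finI: "finite I" and iI: "i \<in> I" and p01: "\<And>k. 0 \<le> p k \<and> p k \<le> 1"
    and rb: "\<And>S. S \<subseteq> I \<Longrightarrow> \<bar>r S i\<bar> \<le> 1" and r0: "r {i} i = 0"
  defines "\<sigma> \<equiv> \<Sum>k\<in>I-{i}. p k" and "L \<equiv> \<Sum>k\<in>I-{i}. p k * r {k} i"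
  assumes s0: "0 < \<sigma>" and s1: "\<sigma> \<le> 1/2" and e0: "0 < \<epsilon>"
    and Lc: "-c \<le> L" and Lc': "L \<le> c'" and c0: "0 \<le> c" and c0': "0 \<le> c'"
    and H1: "\<sigma> + (c + 2*\<sigma>^2)/(\<sigma>/2) \<le> \<epsilon> \<or> (0 < p i \<and> \<sigma> / p i * 2 \<le> \<epsilon>)"
    and H2: "(c' + 2*\<sigma>^2)/(\<sigma>/2) + \<sigma> \<le> \<epsilon> \<or> p i / (\<sigma>/2) * 2 \<le> \<epsilon>"
    and ys: "strategy y"
  shows "payoff I r ((\<lambda>k t. p k)(i := y)) i - \<epsilon> \<le> payoff I r (\<lambda>k t. p k) i"
proof -
  note E = est[of I i p r, OF finI iI p01 rb r0]
  define q where "q = qq I i p"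
  define A where "A = AA I i p r"
  define B where "B = BB I i p r"
  have A1: "\<bar>A\<bar> \<le> 1 - q" and B1: "\<bar>B\<bar> \<le> 1 - q" and q\<sigma>: "1 - q \<le> \<sigma>"
    and q\<sigma>2: "\<sigma> * (1 - \<sigma>) \<le> 1 - q" and BL: "\<bar>B - L\<bar> \<le> 2 * \<sigma>^2" and q0: "0 \<le> q"
    using E by (simp_all add: q_def A_def B_def \<sigma>_def L_def)
  have "\<sigma>*\<sigma> \<le> \<sigma>*(1/2)" using s0 s1 by (intro mult_left_mono) auto
  then have h1: "\<sigma>/2 \<le> \<sigma> * (1 - \<sigma>)" by (simp add: algebra_simps)
  have d: "\<sigma>/2 \<le> 1 - q" using h1 q\<sigma>2 by linarith
  have d0: "0 < \<sigma>/2" using s0 by simp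
  have q1: "q < 1" using d d0 by linarith
  define v where "v = B / (1 - q)"
  have vlb: "-((c + 2*\<sigma>^2)/(\<sigma>/2)) \<le> v" unfolding v_def
    by (rule div_lb) (use BL Lc c0 d d0 in \<open>auto simp: abs_le_iff\<close>)
  have vub: "v \<le> (c' + 2*\<sigma>^2)/(\<sigma>/2)" unfolding v_def
    by (rule div_ub) (use BL Lc' c0' d d0 in \<open>auto simp: abs_le_iff\<close>)
  have v1: "\<bar>v\<bar> \<le> 1" unfolding v_def by (rule abs_div1) (use B1 d d0 in auto)
  have Aub: "A \<le> \<sigma>" "-\<sigma> \<le> A" using A1 q\<sigma> by (auto simp: abs_le_iff)
  define \<alpha>0 where "\<alpha>0 = p i / (1 - (1 - p i) * q)"
  note AB = alpha_bounds[of "p i" q, OF p01[THEN conjunct1] p01[THEN conjunct2] q0 q1]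
  have a0: "0 \<le> \<alpha>0" "\<alpha>0 \<le> 1" using AB by (auto simp: \<alpha>0_def)
  have c1: "(1 - \<alpha>0) * (A - v) \<le> \<epsilon>"
  proof (cases "A - v \<le> 0")
    case True
    then have "(1 - \<alpha>0) * (A - v) \<le> 0" using a0 by (simp add: mult_nonneg_nonpos)
    then show ?thesis using e0 by simp
  next
    case False
    show ?thesis using H1
    proof
      assume h: "\<sigma> + (c + 2*\<sigma>^2)/(\<sigma>/2) \<le> \<epsilon>"
      have "(1 - \<alpha>0) * (A - v) \<le> 1 * (A - v)" using False a0 by (intro mult_right_mono) auto
      then have m: "(1 - \<alpha>0) * (A - v) \<le> A - v" by simp
      have "A - v \<le> \<sigma> + (c + 2*\<sigma>^2)/(\<sigma>/2)" using vlb Aub by linarith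
      then show ?thesis using h m by linarith
    next
      assume h: "0 < p i \<and> \<sigma> / p i * 2 \<le> \<epsilon>"
      have "1 - \<alpha>0 \<le> (1 - q) / p i" using AB h by (simp add: \<alpha>0_def)
      also have "\<dots> \<le> \<sigma> / p i" using q\<sigma> h by (intro divide_right_mono) auto
      finally have x: "1 - \<alpha>0 \<le> \<sigma> / p i" .
      have y: "A - v \<le> 2" using v1 A1 q\<sigma> s1 Aub by (auto simp: abs_le_iff)
      have "(1 - \<alpha>0) * (A - v) \<le> (\<sigma> / p i) * 2"
        by (rule mult_mono[OF x y]) (use s0 h False in auto)
      then show ?thesis using h by linarith
    qed
  qed
  have c2: "\<alpha>0 * (v - A) \<le> \<epsilon>"
  proof (cases "v - A \<le> 0")
    case True
    then have "\<alpha>0 * (v - A) \<le> 0" using a0 by (simp add: mult_nonneg_nonpos)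
    then show ?thesis using e0 by simp
  next
    case False
    show ?thesis using H2
    proof
      assume h: "(c' + 2*\<sigma>^2)/(\<sigma>/2) + \<sigma> \<le> \<epsilon>"
      have "\<alpha>0 * (v - A) \<le> 1 * (v - A)" using False a0 by (intro mult_right_mono) auto
      then have m: "\<alpha>0 * (v - A) \<le> v - A" by simp
      have "v - A \<le> (c' + 2*\<sigma>^2)/(\<sigma>/2) + \<sigma>" using vub Aub by linarith
      then show ?thesis using h m by linarith
    next
      assume h: "p i / (\<sigma>/2) * 2 \<le> \<epsilon>"
      have "\<alpha>0 \<le> p i / (1 - q)" using AB by (simp add: \<alpha>0_def)
      also have "\<dots> \<le> p i / (\<sigma>/2)" using d d0 p01[of i] by (intro divide_left_mono) auto
      finally have x: "\<alpha>0 \<le> p i / (\<sigma>/2)" .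
      have y: "v - A \<le> 2" using v1 A1 q\<sigma> s1 Aub by (auto simp: abs_le_iff)
      have "\<alpha>0 * (v - A) \<le> (p i / (\<sigma>/2)) * 2"
        by (rule mult_mono[OF x y]) (use a0 p01[of i] d0 False in auto)
      then show ?thesis using h by linarith
    qed
  qed
  show ?thesis
    by (rule eq_player[OF finI iI p01 _ _ _ ys]) (use q1 c1 c2 in \<open>simp_all add: q_def A_def v_def B_def \<alpha>0_def\<close>)
qed

lemma L_abs:
  fixes I :: "nat set" and i :: nat and p :: "nat \<Rightarrow> real" and r :: "nat set \<Rightarrow> nat \<Rightarrow> real"
  assumes finI: "finite I" and p01: "\<And>k. 0 \<le> p k \<and> p k \<le> 1"
    and rb: "\<And>S. S \<subseteq> I \<Longrightarrow> \<bar>r S i\<bar> \<le> 1"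
  shows "\<bar>\<Sum>k\<in>I-{i}. p k * r {k} i\<bar> \<le> (\<Sum>k\<in>I-{i}. p k)"
proof -
  have "\<bar>\<Sum>k\<in>I-{i}. p k * r {k} i\<bar> \<le> (\<Sum>k\<in>I-{i}. \<bar>p k * r {k} i\<bar>)" by (rule sum_abs)
  also have "\<dots> \<le> (\<Sum>k\<in>I-{i}. p k)"
  proof (rule sum_mono)
    fix k assume "k \<in> I - {i}"
    then have "\<bar>r {k} i\<bar> \<le> 1" by (intro rb) auto
    then show "\<bar>p k * r {k} i\<bar> \<le> p k" using p01[of k] by (simp add: abs_mult mult_left_le)
  qed
  finally show ?thesis .
qed


lemma level_dec: "normal_level I r (Suc l) \<subseteq> normal_level I r l" by auto

lemma level_antimono: "m \<le> l \<Longrightarrow> normal_level I r l \<subseteq> normal_level I r m"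
proof (induction l)
  case 0 then show ?case by simp
next
  case (Suc l)
  show ?case
  proof (cases "m = Suc l")
    case True then show ?thesis by simp
  next
    case False
    then have "m \<le> l" using Suc.prems by simp
    then show ?thesis using Suc.IH level_dec[of I r l] by blast
  qed
qed

lemma level_sub: "normal_level I r l \<subseteq> I"
  using level_antimono[of 0 l I r] by simp

lemma np_sub: "normal_players I r \<subseteq> I"
  unfolding normal_players_def by (metis INT_lower UNIV_I normal_level.simps(1))

lemma np_out:
  assumes "i \<in> I" "i \<notin> normal_players I r"
  shows "\<exists>m. i \<in> normal_level I r m \<and> i \<notin> normal_level I r (Suc m)"
proof -
  obtain l where l: "i \<notin> normal_level I r l" using assms(2) unfolding normal_players_def by auto
  have "i \<notin> normal_level I r l \<Longrightarrow> \<exists>m. i \<in> normal_level I r m \<and> i \<notin> normal_level I r (Suc m)"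
  proof (induction l)
    case 0 then show ?case using assms(1) by simp
  next
    case (Suc l)
    show ?case
    proof (cases "i \<in> normal_level I r l")
      case True then show ?thesis using Suc.prems by blast
    next
      case False then show ?thesis using Suc.IH by blast
    qed
  qed
  then show ?thesis using l by blast
qed

lemma np_out_pos:
  assumes "i \<in> I" "i \<notin> normal_players I r" "k \<in> normal_players I r"
  shows "0 < r {k} i"
proof -
  obtain m where m: "i \<in> normal_level I r m" "i \<notin> normal_level I r (Suc m)"
    using np_out[OF assms(1,2)] by blast
  have k: "k \<in> normal_level I r m" using assms(3) unfolding normal_players_def by auto
  have "k \<noteq> i" using assms by auto
  then show ?thesis using m k by force
qed

lemma level_stab:
  assumes "finite I"
  shows "\<exists>l. normal_level I r (Suc l) = normal_level I r l"
proof (rule ccontr)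
  assume "\<not> ?thesis"
  then have ne: "\<And>l. normal_level I r (Suc l) \<noteq> normal_level I r l" by blast
  have fin: "\<And>l. finite (normal_level I r l)" using assms level_sub finite_subset by metis
  have "card (normal_level I r l) + l \<le> card I" for l
  proof (induction l)
    case 0 then show ?case by simp
  next
    case (Suc l)
    have "normal_level I r (Suc l) \<subset> normal_level I r l" using ne[of l] level_dec[of I r l] by blast
    then have "card (normal_level I r (Suc l)) < card (normal_level I r l)"
      using fin by (intro psubset_card_mono) auto
    then show ?case using Suc.IH by simp
  qed
  from this[of "Suc (card I)"] show False by simp
qed

lemma np_stab:
  assumes "finite I" "i \<in> normal_players I r"
  shows "\<exists>j\<in>normal_players I r. j \<noteq> i \<and> r {j} i \<le> 0"
proof -
  obtain l where l: "normal_level I r (Suc l) = normal_level I r l" using level_stab[OF assms(1)] by blast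
  have eq: "normal_level I r (l + d) = normal_level I r l" for d
  proof (induction d)
    case 0 then show ?case by simp
  next
    case (Suc d)
    have "normal_level I r (l + Suc d) = normal_level I r (Suc (l + d))" by simp
    also have "\<dots> = normal_level I r (Suc l)"
      by (simp only: normal_level.simps Suc.IH)
    finally show ?case using l by simp
  qed
  have K: "normal_players I r = normal_level I r l"
  proof
    show "normal_players I r \<subseteq> normal_level I r l" unfolding normal_players_def by auto
    show "normal_level I r l \<subseteq> normal_players I r"
      unfolding normal_players_def
    proof (rule INT_greatest)
      fix m show "normal_level I r l \<subseteq> normal_level I r m"
      proof (cases "m \<le> l")
        case True then show ?thesis by (rule level_antimono)
      next
        case False
        then obtain d where "m = l + d" by (metis le_add_diff_inverse nat_le_linear)
        then show ?thesis using eq by simp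
      qed
    qed
  qed
  have "i \<in> normal_level I r (Suc l)" using assms(2) K l by simp
  then show ?thesis using K by auto
qed


lemma build:
  fixes p :: "nat \<Rightarrow> real"
  assumes p01: "\<And>k. 0 \<le> p k \<and> p k \<le> 1"
    and H: "\<And>i y. i \<in> I \<Longrightarrow> strategy y \<Longrightarrow> payoff I r ((\<lambda>k t. p k)(i := y)) i - \<epsilon> \<le> payoff I r (\<lambda>k t. p k) i"
  shows "stationary I (\<lambda>k t. p k) \<and> eps_equilibrium I r \<epsilon> (\<lambda>k t. p k)"
  using p01 H unfolding stationary_def eps_equilibrium_def profile_def strategy_def
  by (auto simp: strategy_def)

lemma four: "0 < (\<sigma>::real) \<Longrightarrow> (0 + 2*\<sigma>^2)/(\<sigma>/2) = 4*\<sigma>"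
  by (simp add: power2_eq_square field_simps)

lemma two_point:
  fixes f :: "nat \<Rightarrow> real"
  assumes "finite A"
  shows "(\<Sum>k\<in>A. ((if k = a then x else 0) + (if k = b then y else 0)) * f k)
     = (if a \<in> A then x * f a else 0) + (if b \<in> A then y * f b else 0)"
proof -
  have e: "((if k = a then x else 0) + (if k = b then y else 0)) * f k
      = (if k = a then x * f a else 0) + (if k = b then y * f b else 0)" for k by (auto simp: distrib_right)
  show ?thesis unfolding e sum.distrib using assms by (simp add: sum.delta)
qed

lemma restrict_sum:
  fixes f :: "nat \<Rightarrow> real"
  assumes "finite I" "K \<subseteq> I"
  shows "(\<Sum>k\<in>I-{i}. (if k \<in> K then f k else 0)) = (\<Sum>k\<in>K-{i}. f k)"
proof -
  have "(\<Sum>k\<in>I-{i}. (if k \<in> K then f k else 0)) = (\<Sum>k\<in>(I-{i}) \<inter> K. f k)"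
    using assms by (simp add: sum.inter_restrict)
  also have "(I-{i}) \<inter> K = K - {i}" using assms by auto
  finally show ?thesis .
qed

lemma player_ok':
  fixes I :: "nat set" and i :: nat and p :: "nat \<Rightarrow> real" and r :: "nat set \<Rightarrow> nat \<Rightarrow> real"
  assumes finI: "finite I" and iI: "i \<in> I" and p01: "\<And>k. 0 \<le> p k \<and> p k \<le> 1"
    and rb: "\<And>S. S \<subseteq> I \<Longrightarrow> \<bar>r S i\<bar> \<le> 1" and r0: "r {i} i = 0"
    and sd: "\<sigma> = (\<Sum>k\<in>I-{i}. p k)" and Ld: "L = (\<Sum>k\<in>I-{i}. p k * r {k} i)"
    and s0: "0 < \<sigma>" and s1: "\<sigma> \<le> 1/2" and e0: "0 < \<epsilon>"
    and Lc: "-c \<le> L" and Lc': "L \<le> c'" and c0: "0 \<le> c" and c0': "0 \<le> c'"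
    and H1: "\<sigma> + (c + 2*\<sigma>^2)/(\<sigma>/2) \<le> \<epsilon> \<or> (0 < p i \<and> \<sigma> / p i * 2 \<le> \<epsilon>)"
    and H2: "(c' + 2*\<sigma>^2)/(\<sigma>/2) + \<sigma> \<le> \<epsilon> \<or> p i / (\<sigma>/2) * 2 \<le> \<epsilon>"
    and ys: "strategy y"
  shows "payoff I r ((\<lambda>k t. p k)(i := y)) i - \<epsilon> \<le> payoff I r (\<lambda>k t. p k) i"
  using player_ok[where I=I and i=i and p=p and r=r and c=c and c'=c' and \<epsilon>=\<epsilon> and y=y, OF finI iI p01 rb r0] s0 s1 e0 Lc Lc' c0 c0' H1 H2 ys
  unfolding sd Ld by blast

theorem lemma3:
  fixes N :: nat and r :: "nat set \<Rightarrow> nat \<Rightarrow> real"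
  assumes bounded: "\<forall>S\<subseteq>{1..N}. \<forall>i\<in>{1..N}. \<bar>r S i\<bar> \<le> 1"
    and diag0: "\<forall>i\<in>{1..N}. r {i} i = 0"
    and nonempty: "normal_players {1..N} r \<noteq> {}"
    and lcp: "\<exists>w z0 z. LCP_solution (normal_players {1..N} r) (\<lambda>i k. r {i} k) (\<lambda>_. 0) w z0 z
                \<and> z0 < 1"
  shows "\<forall>\<epsilon>>0. \<exists>x. stationary {1..N} x \<and> eps_equilibrium {1..N} r \<epsilon> x"
proof (intro allI impI)
  fix \<epsilon> :: real assume e0: "0 < \<epsilon>"
  define I where "I = {1..N}"
  define K where "K = normal_players I r"
  have finI: "finite I" by (simp add: I_def)
  have KI: "K \<subseteq> I" unfolding K_def by (rule np_sub)
  have finK: "finite K" using finI KI finite_subset by blast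
  have rb: "\<And>i S. i \<in> I \<Longrightarrow> S \<subseteq> I \<Longrightarrow> \<bar>r S i\<bar> \<le> 1" using bounded by (auto simp: I_def)
  have r0: "\<And>i. i \<in> I \<Longrightarrow> r {i} i = 0" using diag0 by (auto simp: I_def)
  obtain w z0 z where L: "LCP_solution K (\<lambda>i k. r {i} k) (\<lambda>_. 0) w z0 z" and z01: "z0 < 1"
    using lcp unfolding K_def I_def by blast
  have w0: "\<And>k. k \<in> K \<Longrightarrow> 0 \<le> w k" and zz0: "0 \<le> z0" and zn: "\<And>k. k \<in> K \<Longrightarrow> 0 \<le> z k"
    and zsum: "z0 + (\<Sum>k\<in>K. z k) = 1"
    and weq: "\<And>k. k \<in> K \<Longrightarrow> w k = (\<Sum>l\<in>K. z l * r {l} k)"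
    and compl: "\<And>k. k \<in> K \<Longrightarrow> z k = 0 \<or> w k = 0"
    using L unfolding LCP_solution_def by auto
  define Z where "Z = (\<Sum>k\<in>K. z k)"
  have Z0: "0 < Z" "Z \<le> 1" using zsum z01 zz0 by (auto simp: Z_def)
  have zle: "\<And>k. k \<in> K \<Longrightarrow> z k \<le> Z" unfolding Z_def using finK zn by (intro member_le_sum) auto
  define \<delta> where "\<delta> = min (1/4) (\<epsilon>/12)"
  have d0: "0 < \<delta>" "\<delta> \<le> 1/4" "12 * \<delta> \<le> \<epsilon>" using e0 by (auto simp: \<delta>_def)
  show "\<exists>x. stationary {1..N} x \<and> eps_equilibrium {1..N} r \<epsilon> x"
  proof (cases "\<exists>a\<in>K. \<exists>b\<in>K. a \<noteq> b \<and> 0 < z a \<and> 0 < z b")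
    case True
    then obtain a b where ab: "a \<in> K" "b \<in> K" "a \<noteq> b" "0 < z a" "0 < z b" by blast
    define p where "p = (\<lambda>k. if k \<in> K then \<delta> * z k else 0)"
    have p01: "\<And>k. 0 \<le> p k \<and> p k \<le> 1"
    proof -
      fix k show "0 \<le> p k \<and> p k \<le> 1"
      proof (cases "k \<in> K")
        case True
        have "\<delta> * z k \<le> 1 * 1" using d0 zle[OF True] Z0 zn[OF True] by (intro mult_mono) auto
        then show ?thesis using True d0 zn[OF True] by (simp add: p_def)
      qed (simp add: p_def)
    qed
    have "stationary I (\<lambda>k t. p k) \<and> eps_equilibrium I r \<epsilon> (\<lambda>k t. p k)"
    proof (rule build[OF p01])
      fix i y assume iI: "i \<in> I" and ys: "strategy y"
      define \<sigma> where "\<sigma> = (\<Sum>k\<in>I-{i}. p k)"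
      define Lv where "Lv = (\<Sum>k\<in>I-{i}. p k * r {k} i)"
      have \<sigma>eq: "\<sigma> = \<delta> * (\<Sum>k\<in>K-{i}. z k)"
        unfolding \<sigma>_def p_def by (subst restrict_sum[OF finI KI]) (simp add: sum_distrib_left)
      obtain c where c: "c \<in> K" "c \<noteq> i" "0 < z c" using ab by metis
      have "z c \<le> (\<Sum>k\<in>K-{i}. z k)" using c finK zn by (intro member_le_sum) auto
      then have s0: "0 < \<sigma>" using \<sigma>eq d0 c by (simp add: mult_pos_pos)
      have "(\<Sum>k\<in>K-{i}. z k) \<le> Z" unfolding Z_def using finK zn by (intro sum_mono2) auto
      then have "\<sigma> \<le> \<delta> * 1" unfolding \<sigma>eq using d0 Z0 by (intro mult_left_mono) auto
      then have s1: "\<sigma> \<le> 1/2" "\<sigma> \<le> \<delta>" using d0 by auto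
      define S where "S = (\<Sum>k\<in>K. z k * r {k} i)"
      have Lveq: "Lv = \<delta> * S"
      proof -
        have "Lv = (\<Sum>k\<in>I-{i}. (if k \<in> K then \<delta> * z k * r {k} i else 0))"
          unfolding Lv_def p_def by (rule sum.cong) auto
        also have "\<dots> = (\<Sum>k\<in>K-{i}. \<delta> * z k * r {k} i)" by (rule restrict_sum[OF finI KI])
        also have "\<dots> = \<delta> * (\<Sum>k\<in>K-{i}. z k * r {k} i)" by (simp add: sum_distrib_left mult.assoc)
        also have "(\<Sum>k\<in>K-{i}. z k * r {k} i) = S"
        proof (cases "i \<in> K")
          case True
          have "S = z i * r {i} i + (\<Sum>k\<in>K-{i}. z k * r {k} i)"
            unfolding S_def using finK True by (subst sum.remove) auto
          then show ?thesis using r0[OF iI] by simp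
        next
          case False then show ?thesis by (simp add: S_def)
        qed
        finally show ?thesis .
      qed
      have S0: "0 \<le> S"
      proof (cases "i \<in> K")
        case True then show ?thesis using weq w0 by (simp add: S_def)
      next
        case False
        show ?thesis unfolding S_def
        proof (rule sum_nonneg)
          fix k assume k: "k \<in> K"
          have "0 < r {k} i" using np_out_pos[where i=i and k=k and I=I and r=r] iI False k by (simp add: K_def)
          then show "0 \<le> z k * r {k} i" using zn[OF k] by simp
        qed
      qed
      have Lv0: "0 \<le> Lv" using Lveq S0 d0 by simp
      have Labs: "\<bar>Lv\<bar> \<le> \<sigma>" unfolding Lv_def \<sigma>_def
        by (rule L_abs[OF finI p01]) (use rb iI in auto)
      show "payoff I r ((\<lambda>k t. p k)(i := y)) i - \<epsilon> \<le> payoff I r (\<lambda>k t. p k) i"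
      proof (cases "i \<in> K \<and> 0 < z i")
        case True
        then have "w i = 0" using compl by force
        then have "S = 0" using weq True by (simp add: S_def)
        then have Lz: "Lv = 0" using Lveq by simp
        have h: "\<sigma> + (0 + 2*\<sigma>^2)/(\<sigma>/2) \<le> \<epsilon>" using four[OF s0] s1 d0 by simp
        have h': "(0 + 2*\<sigma>^2)/(\<sigma>/2) + \<sigma> \<le> \<epsilon>" using four[OF s0] s1 d0 by simp
        show ?thesis
          by (rule player_ok'[where I=I and i=i and p=p and r=r, OF finI iI p01 rb[OF iI] r0[OF iI] \<sigma>_def Lv_def s0 s1(1) e0 _ _ _ _ disjI1[OF h] disjI1[OF h'] ys]) (use Lz in auto)
      next
        case False
        then have pi0: "p i = 0" using zn[of i] by (auto simp: p_def)
        have h: "\<sigma> + (0 + 2*\<sigma>^2)/(\<sigma>/2) \<le> \<epsilon>" using four[OF s0] s1 d0 by simp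
        have h': "p i / (\<sigma>/2) * 2 \<le> \<epsilon>" using pi0 e0 by simp
        show ?thesis
          by (rule player_ok'[where I=I and i=i and p=p and r=r, OF finI iI p01 rb[OF iI] r0[OF iI] \<sigma>_def Lv_def s0 s1(1) e0 _ _ _ _ disjI1[OF h] disjI2[OF h'] ys]) (use Lv0 Labs s0 in \<open>auto simp: abs_le_iff\<close>)
      qed
    qed
    then show ?thesis unfolding I_def by blast
  next
    case False
    have "\<exists>i0\<in>K. 0 < z i0"
    proof (rule ccontr)
      assume "\<not> ?thesis"
      then have "\<And>k. k \<in> K \<Longrightarrow> z k = 0" using zn by force
      then have "Z = 0" by (simp add: Z_def)
      then show False using Z0 by simp
    qed
    then obtain i0 where i0: "i0 \<in> K" "0 < z i0" by blast
    have zo: "\<And>k. k \<in> K \<Longrightarrow> k \<noteq> i0 \<Longrightarrow> z k = 0" using False i0 zn by force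
    obtain j where j: "j \<in> K" "j \<noteq> i0" "r {j} i0 \<le> 0"
      using np_stab[OF finI i0(1)[unfolded K_def]] unfolding K_def by blast
    have ri0: "\<And>k. k \<in> I \<Longrightarrow> k \<noteq> i0 \<Longrightarrow> 0 \<le> r {i0} k"
    proof -
      fix k assume kI: "k \<in> I" and ki: "k \<noteq> i0"
      show "0 \<le> r {i0} k"
      proof (cases "k \<in> K")
        case True
        have "w k = (\<Sum>l\<in>K. z l * r {l} k)" using weq True by simp
        also have "\<dots> = z i0 * r {i0} k + (\<Sum>l\<in>K-{i0}. z l * r {l} k)"
          using finK i0 by (subst sum.remove) auto
        also have "(\<Sum>l\<in>K-{i0}. z l * r {l} k) = 0" using zo by (intro sum.neutral) auto
        finally have "0 \<le> z i0 * r {i0} k" using w0[OF True] by simp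
        then show ?thesis using i0 by (simp add: zero_le_mult_iff)
      next
        case False
        show ?thesis using np_out_pos[where i=k and k=i0 and I=I and r=r] kI False i0 by (simp add: K_def less_imp_le)
      qed
    qed
    have i0I: "i0 \<in> I" and jI: "j \<in> I" using i0 j KI by auto
    define p where "p = (\<lambda>k. (if k = i0 then \<delta> else 0) + (if k = j then \<delta>^2 else 0))"
    have dd: "\<delta>^2 \<le> \<delta>" "0 < \<delta>^2" "\<delta>^2 \<le> \<delta>/4" using d0 by (auto simp: power2_eq_square)
    have a4: "0 \<le> \<delta>" "\<delta> \<le> 1/4" "0 \<le> \<delta>^2" "\<delta>^2 \<le> \<delta>" using less_imp_le[OF d0(1)] d0(2) dd(1) zero_le_power2[of \<delta>] by blast+
    have p01: "\<And>k. 0 \<le> p k \<and> p k \<le> 1"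
    proof -
      fix k
      show "0 \<le> p k \<and> p k \<le> 1"
      proof -
        have "p k = \<delta> \<or> p k = \<delta>^2 \<or> p k = 0" unfolding p_def using j(2) by auto
        then show ?thesis using a4 by (elim disjE) linarith+
      qed
    qed
    have psum: "\<And>A f. finite A \<Longrightarrow> (\<Sum>k\<in>A. p k * f k) = (if i0 \<in> A then \<delta> * f i0 else 0) + (if j \<in> A then \<delta>^2 * f j else 0)"
      unfolding p_def by (rule two_point)
    have "stationary I (\<lambda>k t. p k) \<and> eps_equilibrium I r \<epsilon> (\<lambda>k t. p k)"
    proof (rule build[OF p01])
      fix i y assume iI: "i \<in> I" and ys: "strategy y"
      have finU: "finite (I - {i})" using finI by simp
      define \<sigma> where "\<sigma> = (\<Sum>k\<in>I-{i}. p k)"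
      define Lv where "Lv = (\<Sum>k\<in>I-{i}. p k * r {k} i)"
      have \<sigma>e: "\<sigma> = (if i0 \<in> I-{i} then \<delta> else 0) + (if j \<in> I-{i} then \<delta>^2 else 0)"
        using psum[OF finU, of "\<lambda>_. 1"] by (simp add: \<sigma>_def)
      have Le: "Lv = (if i0 \<in> I-{i} then \<delta> * r {i0} i else 0) + (if j \<in> I-{i} then \<delta>^2 * r {j} i else 0)"
        using psum[OF finU, of "\<lambda>k. r {k} i"] by (simp add: Lv_def)
      have Labs: "\<bar>Lv\<bar> \<le> \<sigma>" unfolding Lv_def \<sigma>_def
        by (rule L_abs[OF finI p01]) (use rb iI in auto)
      have rji: "\<bar>r {j} i\<bar> \<le> 1" using rb iI jI by auto
      consider "i = i0" | "i = j" | "i \<noteq> i0" "i \<noteq> j" by blast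
      then show "payoff I r ((\<lambda>k t. p k)(i := y)) i - \<epsilon> \<le> payoff I r (\<lambda>k t. p k) i"
      proof cases
        case 1
        have s: "\<sigma> = \<delta>^2" using \<sigma>e 1 jI j(2) by simp
        have Lv: "Lv \<le> 0" using Le 1 jI j d0 by (simp add: mult_nonneg_nonpos)
        have pi: "p i = \<delta>" using 1 j(2) by (simp add: p_def)
        have h: "0 < p i \<and> \<sigma> / p i * 2 \<le> \<epsilon>" using pi s d0 by (simp add: power2_eq_square)
        have h': "(0 + 2*\<sigma>^2)/(\<sigma>/2) + \<sigma> \<le> \<epsilon>" using four[of \<sigma>] s dd d0 by simp
        have ss: "0 < \<sigma>" "\<sigma> \<le> 1/2" using s dd d0 by auto
        show ?thesis
          by (rule player_ok'[where I=I and i=i and p=p and r=r and c=\<sigma>, OF finI iI p01 rb[OF iI] r0[OF iI] \<sigma>_def Lv_def ss(1) ss(2) e0 _ _ _ _ disjI2[OF h] disjI1[OF h'] ys]) (use Lv Labs ss in \<open>auto simp: abs_le_iff\<close>)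
      next
        case 2
        have s: "\<sigma> = \<delta>" using \<sigma>e 2 i0I j(2) by auto
        have Lv: "0 \<le> Lv" using Le 2 i0I j d0 ri0[OF jI] by simp
        have pi: "p i = \<delta>^2" using 2 j(2) by (simp add: p_def)
        have h: "\<sigma> + (0 + 2*\<sigma>^2)/(\<sigma>/2) \<le> \<epsilon>" using four[of \<sigma>] s d0 by simp
        have h': "p i / (\<sigma>/2) * 2 \<le> \<epsilon>" using pi s d0 by (simp add: power2_eq_square)
        have ss: "0 < \<sigma>" "\<sigma> \<le> 1/2" using s d0 by auto
        show ?thesis
          by (rule player_ok'[where I=I and i=i and p=p and r=r, OF finI iI p01 rb[OF iI] r0[OF iI] \<sigma>_def Lv_def ss(1) ss(2) e0 _ _ _ _ disjI1[OF h] disjI2[OF h'] ys]) (use Lv Labs ss in \<open>auto simp: abs_le_iff\<close>)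
      next
        case 3
        have s: "\<sigma> = \<delta> + \<delta>^2" using \<sigma>e 3 i0I jI by simp
        have Lve: "Lv = \<delta> * r {i0} i + \<delta>^2 * r {j} i" using Le 3 i0I jI by simp
        have "0 \<le> \<delta> * r {i0} i" using ri0[OF iI] 3 d0 by simp
        moreover have "-(\<delta>^2) \<le> \<delta>^2 * r {j} i" using rji dd
        proof -
          have "-1 \<le> r {j} i" using rji by (simp add: abs_le_iff)
          then have "\<delta>^2 * (-1) \<le> \<delta>^2 * r {j} i" by (rule mult_left_mono) simp
          then show ?thesis by simp
        qed
        ultimately have Lv: "-(\<delta>^2) \<le> Lv" using Lve by simp
        have pi: "p i = 0" using 3 by (simp add: p_def)
        have s0: "0 < \<sigma>" "\<sigma> \<le> 1/2" "\<delta> \<le> \<sigma>" "\<sigma> \<le> 2 * \<delta>" using s a4 d0(1) by linarith+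
        have "(\<delta>^2 + 2*\<sigma>^2)/(\<sigma>/2) = 2 * (\<delta>^2/\<sigma>) + 4 * \<sigma>"
          using s0 by (simp add: power2_eq_square field_simps)
        moreover have "\<delta>^2/\<sigma> \<le> \<delta>^2/\<delta>" using s0 d0 dd by (intro divide_left_mono) auto
        moreover have "\<delta>^2/\<delta> = \<delta>" using d0 by (simp add: power2_eq_square)
        ultimately have "(\<delta>^2 + 2*\<sigma>^2)/(\<sigma>/2) \<le> 2 * \<delta> + 4 * \<sigma>" by linarith
        then have h: "\<sigma> + (\<delta>^2 + 2*\<sigma>^2)/(\<sigma>/2) \<le> \<epsilon>" using s0 d0 by linarith
        have h': "p i / (\<sigma>/2) * 2 \<le> \<epsilon>" using pi e0 by simp
        show ?thesis
          by (rule player_ok'[where I=I and i=i and p=p and r=r, OF finI iI p01 rb[OF iI] r0[OF iI] \<sigma>_def Lv_def s0(1) s0(2) e0 _ _ _ _ disjI1[OF h] disjI2[OF h'] ys]) (use Lv Labs s0 dd in \<open>auto simp: abs_le_iff\<close>)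
      qed
    qed
    then show ?thesis unfolding I_def by blast
  qed
qed


end
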